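(* Let $\Sigma$ be an alphabet containing at least two letters and let $f\colon\Sigma^*\to\Sigma^*$ be RCP. Then the integer $p_f=|f(c)|-|f(\varepsilon)|$ does not depend on the letter $c\in\Sigma$, and for all $x\in\Sigma^*$ and all $a\in\Sigma$, $$|f(x)|=p_f|x|+|f(\varepsilon)|,\qquad |f(x)|_a=p_f|x|_a+|f(\varepsilon)|_a.$$
   Context: $\Sigma^*$ is the free monoid over $\Sigma$ (finite words, concatenation, empty word $\varepsilon$); $|u|$ is the length of $u$ and $|u|_a$ the number of occurrences of the letter $a$ in $u$. A function $f\colon(\Sigma^* )^k\to\Sigma^*$ is RCP if for every monoid morphism $\varphi\colon\Sigma^*\to\Sigma^*$ and all $u_1,\ldots,u_k,v_1,\ldots,v_k$ with $\varphi(u_i)=\varphi(v_i)$ for all $i$, we have $\varphi(f(u_1,\ldots,u_k))=\varphi(f(v_1,\ldots,v_k))$. *)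

theory Defs
  imports Main
begin

definition monoid_morphism :: "('a list \<Rightarrow> 'a list) \<Rightarrow> bool" where
  "monoid_morphism \<phi> \<longleftrightarrow> \<phi> [] = [] \<and> (\<forall>u v. \<phi> (u @ v) = \<phi> u @ \<phi> v)"

definition RCP1 :: "('a list \<Rightarrow> 'a list) \<Rightarrow> bool" where
  "RCP1 f \<longleftrightarrow> (\<forall>\<phi> u v. monoid_morphism \<phi> \<longrightarrow> \<phi> u = \<phi> v \<longrightarrow> \<phi> (f u) = \<phi> (f v))"

definition occ :: "'a list \<Rightarrow> 'a \<Rightarrow> nat" where
  "occ u a = length (filter (\<lambda>x. x = a) u)"

end

theory Submission
  imports Defs
begin

definition cnt :: "'a set \<Rightarrow> 'a list \<Rightarrow> nat" where
  "cnt S u = length (filter (\<lambda>x. x \<in> S) u)"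

lemma key:
  assumes "RCP1 f" "cnt S u = cnt S v"
  shows "cnt S (f u) = cnt S (f v)"
proof -
  define \<phi> where "\<phi> = (\<lambda>w. replicate (cnt S w) (undefined::'a))"
  have "monoid_morphism \<phi>"
    unfolding monoid_morphism_def \<phi>_def cnt_def by (simp add: replicate_add)
  moreover have "\<phi> u = \<phi> v" using assms(2) by (simp add: \<phi>_def)
  ultimately have "\<phi> (f u) = \<phi> (f v)" using assms(1) unfolding RCP1_def by blast
  then show ?thesis unfolding \<phi>_def by simp
qed

lemma occ_cnt: "occ u a = cnt {a} u"
  unfolding occ_def cnt_def by (metis singleton_iff)

lemma cnt_pair: "a \<noteq> b \<Longrightarrow> cnt {a,b} w = occ w a + occ w b"
  unfolding occ_def cnt_def by (induction w) auto

lemma occ_rep: "occ (replicate n a) a = n"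
  unfolding occ_def by simp

lemma occ_rep2: "b \<noteq> a \<Longrightarrow> occ (replicate n a) b = 0"
  unfolding occ_def by simp

lemma occ_app: "occ (u @ v) a = occ u a + occ v a"
  unfolding occ_def by simp

lemma length_occ: "length (w::('a::finite) list) = (\<Sum>a\<in>UNIV. occ w a)"
proof (induction w)
  case Nil
  then show ?case by (simp add: occ_def)
next
  case (Cons x w)
  have "(\<Sum>a\<in>UNIV. occ (x#w) a) = (\<Sum>a\<in>UNIV. (if a = x then 1 else 0) + occ w a)"
    by (rule sum.cong) (auto simp: occ_def)
  also have "\<dots> = 1 + (\<Sum>a\<in>UNIV. occ w a)" by (simp add: sum.distrib)
  finally show ?case using Cons by simp
qed

context
  fixes f :: "'a list \<Rightarrow> 'a list"
  assumes R: "RCP1 f"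
begin

definition G :: "'a \<Rightarrow> nat \<Rightarrow> nat" where
  "G a n = occ (f (replicate n a)) a"

definition d :: "'a \<Rightarrow> int" where
  "d a = int (G a 1) - int (G a 0)"

lemma occ_f: "occ (f x) a = G a (occ x a)"
  unfolding G_def occ_cnt
  by (rule key[OF R]) (simp add: occ_cnt[symmetric] occ_rep)

lemma occ_f_other: "b \<noteq> a \<Longrightarrow> occ (f (replicate n a)) b = G b 0"
  using occ_f[of "replicate n a" b] by (simp add: occ_rep2)

lemma sum_rel:
  assumes "a \<noteq> b"
  shows "G a n + G b m = G a (n+m) + G b 0"
proof -
  let ?x = "replicate n a @ replicate m b"
  have "cnt {a,b} ?x = cnt {a,b} (replicate (n+m) a)"
    using assms by (simp add: cnt_pair occ_app occ_rep occ_rep2)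
  then have "cnt {a,b} (f ?x) = cnt {a,b} (f (replicate (n+m) a))" by (rule key[OF R])
  then have "occ (f ?x) a + occ (f ?x) b = G a (n+m) + G b 0"
    using assms by (simp add: cnt_pair occ_f_other G_def)
  moreover have "occ (f ?x) a = G a n" "occ (f ?x) b = G b m"
    using assms by (simp_all add: occ_f occ_app occ_rep occ_rep2)
  ultimately show ?thesis by simp
qed

lemma d_eq: "a \<noteq> b \<Longrightarrow> d a = d b"
  using sum_rel[of a b 0 1] unfolding d_def by simp

lemma G_lin:
  assumes "a \<noteq> b"
  shows "int (G a n) = int (G a 0) + int n * d a"
proof (induction n)
  case 0
  then show ?case by simp
next
  case (Suc n)
  have "G a n + G b 1 = G a (Suc n) + G b 0" using sum_rel[OF assms, of n 1] by simp
  then have "int (G a (Suc n)) = int (G a n) + d b" unfolding d_def by simp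
  then show ?case using Suc d_eq[OF assms] by (simp add: algebra_simps)
qed

end

theorem mainTheorem6:
  fixes f :: "('a::finite) list \<Rightarrow> 'a list"
  assumes "card (UNIV :: 'a set) \<ge> 2"
    and "RCP1 f"
  shows "\<exists>p::int.
           (\<forall>c::'a. int (length (f [c])) - int (length (f [])) = p) \<and>
           (\<forall>x. int (length (f x)) = p * int (length x) + int (length (f []))) \<and>
           (\<forall>x a. int (occ (f x) a) = p * int (occ x a) + int (occ (f []) a))"
proof -
  obtain a0 :: 'a where True by blast
  define p where "p = d f a0"
  have other: "\<exists>b. b \<noteq> (a::'a)" for a
  proof (rule ccontr)
    assume "\<not> ?thesis"
    then have U: "UNIV = {a}" by auto
    have "card (UNIV::'a set) = 1" unfolding U by simp
    then show False using assms(1) by simp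
  qed
  have dp: "d f a = p" for a
    unfolding p_def by (cases "a = a0") (auto intro: d_eq[OF assms(2)])
  have occF: "int (occ (f x) a) = p * int (occ x a) + int (occ (f []) a)" for x a
  proof -
    obtain b where ba: "b \<noteq> a" using other[of a] by blast
    have "int (occ (f x) a) = int (G f a (occ x a))" by (simp add: occ_f[OF assms(2)])
    also have "\<dots> = int (G f a 0) + int (occ x a) * p"
      using G_lin[OF assms(2) ba[symmetric], of "occ x a"] dp by simp
    also have "G f a 0 = occ (f []) a" by (simp add: G_def[OF assms(2)])
    finally show ?thesis by simp
  qed
  have lenF: "int (length (f x)) = p * int (length x) + int (length (f []))" for x
  proof -
    have "int (length (f x)) = (\<Sum>a\<in>UNIV. int (occ (f x) a))"
      by (subst length_occ) simp
    also have "\<dots> = (\<Sum>a\<in>UNIV. p * int (occ x a) + int (occ (f []) a))"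
      by (rule sum.cong) (rule refl, rule occF)
    also have "\<dots> = p * (\<Sum>a\<in>UNIV. int (occ x a)) + (\<Sum>a\<in>UNIV. int (occ (f []) a))"
      by (simp add: sum.distrib sum_distrib_left)
    also have "\<dots> = p * int (length x) + int (length (f []))"
      by (simp add: length_occ[of x] length_occ[of "f []"])
    finally show ?thesis .
  qed
  have cF: "int (length (f [c])) - int (length (f [])) = p" for c
    using lenF[of "[c]"] by simp
  show ?thesis
    using cF lenF occF by blast
qed

end
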